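(* Let $F\colon\mathsf{Nom}\to\mathsf{Nom}$ be $FX=1+\mathbb{A}\times X+[\mathbb{A}]X$. The initial $F$-algebra is the nominal set $\overline{\mathbb{A}}^*/{=_\alpha}$ of bar strings modulo $\alpha$-equivalence with the structure $\iota$ given by $\iota( * )=[\varepsilon]_\alpha$, $\iota(a,[w]_\alpha)=[aw]_\alpha$ and $\iota(\langle a\rangle[w]_\alpha)=[\mathord{|}a\,w]_\alpha$.
   Context: Fix a countably infinite set $\mathbb{A}$ of names; $\mathsf{Nom}$ is the category of nominal sets (sets with an action of the group of finite permutations of $\mathbb{A}$ in which each element $x$ has a least finite support $\mathrm{supp}(x)$; $a$ is fresh for $x$, $a\#x$, if $a\notin\mathrm{supp}(x)$) and equivariant maps. $[\mathbb{A}]X$ is the quotient of $\mathbb{A}\times X$ by $(a,x)\sim(b,y)$ iff $(a\,c)\cdot x=(b\,c)\cdot y$ for some fresh $c$, classes written $\langle a\rangle x$. Bar strings are finite words over $\overline{\mathbb{A}}=\mathbb{A}\cup\{\mathord{|}a: a\in\mathbb{A}\}$, with pointwise action; $\mathord{|}a$ binds $a$ to its right. $=_\alpha$ is the least equivalence relation on $\overline{\mathbb{A}}^*$ with $x\,\mathord{|}a\,v=_\alpha x\,\mathord{|}b\,w$ for all $a,b\in\mathbb{A}$, $x,v,w\in\overline{\mathbb{A}}^*$ with $\langle a\rangle v=\langle b\rangle w$ in $[\mathbb{A}]\overline{\mathbb{A}}^*$ (equivalently: $a=b$ and $v=w$, or $b\#v$ and $(a\,b)\cdot v=w$). $[w]_\alpha$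 is the class of $w$; $\overline{\mathbb{A}}^*/{=_\alpha}$ is a nominal set with $\pi\cdot[w]_\alpha=[\pi\cdot w]_\alpha$. *)

theory Defs
  imports Main "HOL-Combinatorics.Perm"
begin

text \<open>The countably infinite set of names is represented by the type nat.
  Finite permutations of names are the library type  name perm
  (bijections moving only finitely many names).\<close>

type_synonym name = nat
type_synonym nperm = "name perm"

definition supports :: "(nperm \<Rightarrow> 'x \<Rightarrow> 'x) \<Rightarrow> name set \<Rightarrow> 'x \<Rightarrow> bool" where
  "supports act S x \<longleftrightarrow> (\<forall>\<pi>. (\<forall>a\<in>S. Perm.apply \<pi> a = a) \<longrightarrow> act \<pi> x = x)"

definition supp :: "(nperm \<Rightarrow> 'x \<Rightarrow> 'x) \<Rightarrow> 'x \<Rightarrow> name set" where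
  "supp act x = \<Inter>{S. finite S \<and> supports act S x}"

definition fresh :: "(nperm \<Rightarrow> 'x \<Rightarrow> 'x) \<Rightarrow> name \<Rightarrow> 'x \<Rightarrow> bool" where
  "fresh act a x \<longleftrightarrow> a \<notin> supp act x"

definition nominal_set :: "'x set \<Rightarrow> (nperm \<Rightarrow> 'x \<Rightarrow> 'x) \<Rightarrow> bool" where
  "nominal_set X act \<longleftrightarrow>
     (\<forall>\<pi>. \<forall>x\<in>X. act \<pi> x \<in> X) \<and>
     (\<forall>x\<in>X. act 1 x = x) \<and>
     (\<forall>\<pi> \<sigma>. \<forall>x\<in>X. act (\<pi> * \<sigma>) x = act \<pi> (act \<sigma> x)) \<and>
     (\<forall>x\<in>X. \<exists>S. finite S \<and> supports act S x \<and>
               (\<forall>S'. finite S' \<and> supports act S' x \<longrightarrow> S \<subseteq> S'))"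

definition equivariant ::
  "'x set \<Rightarrow> (nperm \<Rightarrow> 'x \<Rightarrow> 'x) \<Rightarrow> 'y set \<Rightarrow> (nperm \<Rightarrow> 'y \<Rightarrow> 'y) \<Rightarrow> ('x \<Rightarrow> 'y) \<Rightarrow> bool" where
  "equivariant X actX Y actY f \<longleftrightarrow>
     (\<forall>x\<in>X. f x \<in> Y) \<and> (\<forall>\<pi>. \<forall>x\<in>X. f (actX \<pi> x) = actY \<pi> (f x))"

definition abs_rel :: "(nperm \<Rightarrow> 'x \<Rightarrow> 'x) \<Rightarrow> name \<times> 'x \<Rightarrow> name \<times> 'x \<Rightarrow> bool" where
  "abs_rel act p q \<longleftrightarrow> (case p of (a, x) \<Rightarrow> case q of (b, y) \<Rightarrow>
     (\<exists>c. c \<noteq> a \<and> c \<noteq> b \<and> fresh act c x \<and> fresh act c y \<and>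
          act (Perm.swap a c) x = act (Perm.swap b c) y))"

definition abs_class :: "'x set \<Rightarrow> (nperm \<Rightarrow> 'x \<Rightarrow> 'x) \<Rightarrow> name \<times> 'x \<Rightarrow> (name \<times> 'x) set" where
  "abs_class X act p = {q. snd q \<in> X \<and> abs_rel act p q}"

definition abs_set :: "'x set \<Rightarrow> (nperm \<Rightarrow> 'x \<Rightarrow> 'x) \<Rightarrow> (name \<times> 'x) set set" where
  "abs_set X act = abs_class X act ` (UNIV \<times> X)"

definition abs_act :: "(nperm \<Rightarrow> 'x \<Rightarrow> 'x) \<Rightarrow> nperm \<Rightarrow> (name \<times> 'x) set \<Rightarrow> (name \<times> 'x) set" where
  "abs_act act \<pi> D = (\<lambda>(a, x). (Perm.apply \<pi> a, act \<pi> x)) ` D"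

type_synonym 'x F = "unit + (name \<times> 'x) + (name \<times> 'x) set"

definition F_carrier :: "'x set \<Rightarrow> (nperm \<Rightarrow> 'x \<Rightarrow> 'x) \<Rightarrow> 'x F set" where
  "F_carrier X act = {Inl ()} \<union> Inr ` Inl ` (UNIV \<times> X) \<union> Inr ` Inr ` abs_set X act"

fun F_act :: "(nperm \<Rightarrow> 'x \<Rightarrow> 'x) \<Rightarrow> nperm \<Rightarrow> 'x F \<Rightarrow> 'x F" where
  "F_act act \<pi> (Inl u) = Inl u"
| "F_act act \<pi> (Inr (Inl (a, x))) = Inr (Inl (Perm.apply \<pi> a, act \<pi> x))"
| "F_act act \<pi> (Inr (Inr D)) = Inr (Inr (abs_act act \<pi> D))"

fun F_map :: "'y set \<Rightarrow> (nperm \<Rightarrow> 'y \<Rightarrow> 'y) \<Rightarrow> ('x \<Rightarrow> 'y) \<Rightarrow> 'x F \<Rightarrow> 'y F" where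
  "F_map Y actY h (Inl u) = Inl u"
| "F_map Y actY h (Inr (Inl (a, x))) = Inr (Inl (a, h x))"
| "F_map Y actY h (Inr (Inr D)) =
     Inr (Inr (case (SOME p. p \<in> D) of (a, x) \<Rightarrow> abs_class Y actY (a, h x)))"

definition F_algebra :: "'x set \<Rightarrow> (nperm \<Rightarrow> 'x \<Rightarrow> 'x) \<Rightarrow> ('x F \<Rightarrow> 'x) \<Rightarrow> bool" where
  "F_algebra X act g \<longleftrightarrow>
     nominal_set X act \<and> equivariant (F_carrier X act) (F_act act) X act g"

definition F_alg_hom ::
  "'x set \<Rightarrow> (nperm \<Rightarrow> 'x \<Rightarrow> 'x) \<Rightarrow> ('x F \<Rightarrow> 'x) \<Rightarrow>
   'y set \<Rightarrow> (nperm \<Rightarrow> 'y \<Rightarrow> 'y) \<Rightarrow> ('y F \<Rightarrow> 'y) \<Rightarrow> ('x \<Rightarrow> 'y) \<Rightarrow> bool" where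
  "F_alg_hom X actX f Y actY g h \<longleftrightarrow>
     equivariant X actX Y actY h \<and>
     (\<forall>z\<in>F_carrier X actX. h (f z) = g (F_map Y actY h z))"

definition initial_F_algebra :: "'x set \<Rightarrow> (nperm \<Rightarrow> 'x \<Rightarrow> 'x) \<Rightarrow> ('x F \<Rightarrow> 'x) \<Rightarrow> 'y itself \<Rightarrow> bool" where
  "initial_F_algebra X act f (TYPE('y)) \<longleftrightarrow>
     F_algebra X act f \<and>
     (\<forall>(Y :: 'y set) actY g. F_algebra Y actY g \<longrightarrow>
        (\<exists>h. F_alg_hom X act f Y actY g h \<and>
             (\<forall>h'. F_alg_hom X act f Y actY g h' \<longrightarrow> (\<forall>x\<in>X. h' x = h x))))"

datatype barname = Nm name | Bar name

type_synonym barstring = "barname list"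

fun barname_act :: "nperm \<Rightarrow> barname \<Rightarrow> barname" where
  "barname_act \<pi> (Nm a) = Nm (Perm.apply \<pi> a)"
| "barname_act \<pi> (Bar a) = Bar (Perm.apply \<pi> a)"

definition bs_act :: "nperm \<Rightarrow> barstring \<Rightarrow> barstring" where
  "bs_act \<pi> w = map (barname_act \<pi>) w"

inductive alpha_eq :: "barstring \<Rightarrow> barstring \<Rightarrow> bool" where
  alpha_refl: "alpha_eq w w"
| alpha_sym: "alpha_eq v w \<Longrightarrow> alpha_eq w v"
| alpha_trans: "alpha_eq u v \<Longrightarrow> alpha_eq v w \<Longrightarrow> alpha_eq u w"
| alpha_bind: "abs_class UNIV bs_act (a, v) = abs_class UNIV bs_act (b, w) \<Longrightarrow>
               alpha_eq (x @ Bar a # v) (x @ Bar b # w)"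

definition alpha_class :: "barstring \<Rightarrow> barstring set" where
  "alpha_class w = {v. alpha_eq w v}"

definition BS_alpha :: "barstring set set" where
  "BS_alpha = range alpha_class"

definition BS_alpha_act :: "nperm \<Rightarrow> barstring set \<Rightarrow> barstring set" where
  "BS_alpha_act \<pi> C = bs_act \<pi> ` C"

fun iota :: "barstring set F \<Rightarrow> barstring set" where
  "iota (Inl u) = alpha_class []"
| "iota (Inr (Inl (a, C))) = alpha_class (Nm a # (SOME w. w \<in> C))"
| "iota (Inr (Inr D)) =
     (case (SOME p. p \<in> D) of (a, C) \<Rightarrow> alpha_class (Bar a # (SOME w. w \<in> C)))"

end

theory Submission
  imports Defs
begin


lemma apply_inv_apply[simp]: "Perm.apply (inverse p) (Perm.apply p a) = a"
  by (simp add: apply_inverse bij_is_inj)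
lemma apply_apply_inv[simp]: "Perm.apply p (Perm.apply (inverse p) a) = a"
  by (simp add: apply_inverse bij_is_surj surj_f_inv_f)

lemma swap_apply: "Perm.apply (Perm.swap a b) c = (if c = a then b else if c = b then a else c)"
  by auto

lemma swap_comm3:
  assumes "a \<noteq> c" "a \<noteq> d" "c \<noteq> d"
  shows "Perm.swap a c * Perm.swap c d = Perm.swap c d * Perm.swap a d"
  using assms by (intro perm_eqI) (auto simp: apply_times swap_apply)

lemma swap_conj:
  "Perm.swap (Perm.apply p a) (Perm.apply p c) * p = p * Perm.swap a c"
  by (intro perm_eqI) (auto simp: apply_times swap_apply apply_inj)

lemma ex_fresh: "finite (S::nat set) \<Longrightarrow> \<exists>c. c \<notin> S"
  using ex_new_if_finite infinite_UNIV_nat by blast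

lemma obtain_fresh: "finite (S::nat set) \<Longrightarrow> (\<And>c. c \<notin> S \<Longrightarrow> P) \<Longrightarrow> P"
  using ex_fresh by auto

lemma supp_subset: "finite S \<Longrightarrow> supports act S x \<Longrightarrow> supp act x \<subseteq> S"
  unfolding supp_def by blast

lemma supp_eqI:
  assumes "finite S" "supports act S x" "\<And>S'. finite S' \<Longrightarrow> supports act S' x \<Longrightarrow> S \<subseteq> S'"
  shows "supp act x = S"
  using assms unfolding supp_def by blast

locale nom =
  fixes X :: "'x set" and act :: "nperm \<Rightarrow> 'x \<Rightarrow> 'x"
  assumes nom: "nominal_set X act"
begin

lemma closed[intro]: "x \<in> X \<Longrightarrow> act p x \<in> X"
  using nom unfolding nominal_set_def by blast
lemma act1[simp]: "x \<in> X \<Longrightarrow> act 1 x = x"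
  using nom unfolding nominal_set_def by blast
lemma act_comp: "x \<in> X \<Longrightarrow> act (p * q) x = act p (act q x)"
  using nom unfolding nominal_set_def by blast

lemma act_inv[simp]: "x \<in> X \<Longrightarrow> act (inverse p) (act p x) = x"
  proof - assume "x \<in> X" hence "act (inverse p) (act p x) = act (inverse p * p) x" by (simp only: act_comp) thus ?thesis using \<open>x \<in> X\<close> by simp qed
lemma act_inv2[simp]: "x \<in> X \<Longrightarrow> act p (act (inverse p) x) = x"
  proof - assume "x \<in> X" hence "act p (act (inverse p) x) = act (p * inverse p) x" by (simp only: act_comp) thus ?thesis using \<open>x \<in> X\<close> by simp qed

lemma supp_props: assumes "x \<in> X" shows "finite (supp act x)" "supports act (supp act x) x"
proof -
  obtain S where S: "finite S" "supports act S x" "\<And>S'. finite S' \<and> supports act S' x \<longrightarrow> S \<subseteq> S'"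
    using nom assms unfolding nominal_set_def by metis
  have "supp act x = S" using S by (intro supp_eqI) auto
  thus "finite (supp act x)" "supports act (supp act x) x" using S by auto
qed

lemma swap_fix: assumes "x \<in> X" "a \<notin> supp act x" "b \<notin> supp act x" shows "act (Perm.swap a b) x = x"
proof -
  have "\<forall>c\<in>supp act x. Perm.apply (Perm.swap a b) c = c" using assms(2,3) by (metis apply_swap_same)
  thus ?thesis using supp_props(2)[OF assms(1)] unfolding supports_def by blast
qed

lemma supp_act_sub: assumes "x \<in> X" shows "supp act (act p x) \<subseteq> Perm.apply p ` supp act x"
proof (rule supp_subset)
  show "finite (Perm.apply p ` supp act x)" using supp_props[OF assms] by simp
  show "supports act (Perm.apply p ` supp act x) (act p x)"
    unfolding supports_def
  proof (intro allI impI)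
    fix s assume fx: "\<forall>a\<in>Perm.apply p ` supp act x. Perm.apply s a = a"
    have "\<forall>a\<in>supp act x. Perm.apply (inverse p * s * p) a = a"
      using fx by (auto simp: apply_times)
    hence e: "act (inverse p * s * p) x = x" using supp_props(2)[OF assms] unfolding supports_def by blast
    have "act s (act p x) = act p (act (inverse p * s * p) x)"
      using assms by (simp add: act_comp[symmetric] closed mult.assoc[symmetric])
    thus "act s (act p x) = act p x" using e by simp
  qed
qed

lemma fresh_act: "x \<in> X \<Longrightarrow> c \<notin> supp act x \<Longrightarrow> Perm.apply p c \<notin> supp act (act p x)"
  using supp_act_sub[of x p] by (auto simp: apply_inj)

lemma supp_act_eq: assumes "x \<in> X" shows "supp act (act p x) = Perm.apply p ` supp act x"
proof
  show "supp act (act p x) \<subseteq> Perm.apply p ` supp act x" by (rule supp_act_sub[OF assms])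
  have "supp act x \<subseteq> Perm.apply (inverse p) ` supp act (act p x)"
    using supp_act_sub[of "act p x" "inverse p"] assms by auto
  thus "Perm.apply p ` supp act x \<subseteq> supp act (act p x)" by force
qed

lemma abs_rel_any:
  assumes "x \<in> X" "y \<in> X" "abs_rel act (a,x) (b,y)" "c \<noteq> a" "c \<noteq> b"
    "c \<notin> supp act x" "c \<notin> supp act y"
  shows "act (Perm.swap a c) x = act (Perm.swap b c) y"
proof -
  obtain d where d: "d \<noteq> a" "d \<noteq> b" "d \<notin> supp act x" "d \<notin> supp act y"
    "act (Perm.swap a d) x = act (Perm.swap b d) y"
    using assms(3) unfolding abs_rel_def fresh_def by auto
  show ?thesis
  proof (cases "c = d")
    case True thus ?thesis using d by simp
  next
    case False
    have "act (Perm.swap a c) x = act (Perm.swap a c) (act (Perm.swap c d) x)"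
      using swap_fix assms d by simp
    also have "\<dots> = act (Perm.swap c d) (act (Perm.swap a d) x)"
    proof -
      have "Perm.swap a c * Perm.swap c d = Perm.swap c d * Perm.swap a d"
        using assms d False by (intro swap_comm3) auto
      thus ?thesis using assms(1) by (simp only: act_comp[symmetric])
    qed
    also have "\<dots> = act (Perm.swap c d) (act (Perm.swap b d) y)" using d by simp
    also have "\<dots> = act (Perm.swap b c) (act (Perm.swap c d) y)"
    proof -
      have "Perm.swap b c * Perm.swap c d = Perm.swap c d * Perm.swap b d"
        using assms d False by (intro swap_comm3) auto
      thus ?thesis using assms(2) by (simp only: act_comp[symmetric])
    qed
    also have "\<dots> = act (Perm.swap b c) y"
      using swap_fix assms d by simp
    finally show ?thesis .
  qed
qed

lemma abs_rel_refl: "x \<in> X \<Longrightarrow> abs_rel act (a,x) (a,x)"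
proof -
  assume x: "x \<in> X"
  have "finite (insert a (supp act x))" using supp_props[OF x] by simp
  then obtain c where "c \<notin> insert a (supp act x)" by (rule obtain_fresh)
  thus ?thesis unfolding abs_rel_def fresh_def by auto
qed

lemma abs_rel_sym: "abs_rel act (a,x) (b,y) \<Longrightarrow> abs_rel act (b,y) (a,x)"
proof -
  assume "abs_rel act (a,x) (b,y)"
  then obtain c where "c \<noteq> a \<and> c \<noteq> b \<and> fresh act c x \<and> fresh act c y \<and>
          act (Perm.swap a c) x = act (Perm.swap b c) y" unfolding abs_rel_def by auto
  thus ?thesis unfolding abs_rel_def by (simp, intro exI[of _ c]) simp
qed

lemma abs_rel_trans:
  assumes "x \<in> X" "y \<in> X" "z \<in> X" "abs_rel act (a,x) (b,y)" "abs_rel act (b,y) (d,z)"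
  shows "abs_rel act (a,x) (d,z)"
proof -
  have "finite ({a,b,d} \<union> supp act x \<union> supp act y \<union> supp act z)"
    using supp_props(1)[OF assms(1)] supp_props(1)[OF assms(2)] supp_props(1)[OF assms(3)] by simp
  then obtain c where c: "c \<notin> {a,b,d} \<union> supp act x \<union> supp act y \<union> supp act z"
    by (rule obtain_fresh)
  have "act (Perm.swap a c) x = act (Perm.swap b c) y" by (rule abs_rel_any[OF assms(1,2,4)]) (use c in auto)
  also have "\<dots> = act (Perm.swap d c) z" by (rule abs_rel_any[OF assms(2,3,5)]) (use c in auto)
  finally show ?thesis using c unfolding abs_rel_def fresh_def by (simp, intro exI[of _ c]) simp
qed

lemma abs_class_eq_iff:
  assumes "x \<in> X" "y \<in> X"
  shows "abs_class X act (a,x) = abs_class X act (b,y) \<longleftrightarrow> abs_rel act (a,x) (b,y)"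
proof
  assume "abs_class X act (a,x) = abs_class X act (b,y)"
  moreover have "(b,y) \<in> abs_class X act (b,y)" by (simp add: abs_class_def abs_rel_refl assms)
  ultimately have "(b,y) \<in> abs_class X act (a,x)" by (rule ssubst)
  thus "abs_rel act (a,x) (b,y)" by (simp add: abs_class_def)
next
  assume r: "abs_rel act (a,x) (b,y)"
  have e: "abs_rel act (a,x) (c,z) \<longleftrightarrow> abs_rel act (b,y) (c,z)" if "z \<in> X" for c z
    using abs_rel_trans[OF assms(1,2) that r] abs_rel_trans[OF assms(2,1) that abs_rel_sym[OF r]] by blast
  show "abs_class X act (a,x) = abs_class X act (b,y)"
    unfolding abs_class_def
  proof (rule Collect_cong)
    fix q :: "name \<times> 'x"
    show "(snd q \<in> X \<and> abs_rel act (a, x) q) = (snd q \<in> X \<and> abs_rel act (b, y) q)"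
      using e[of "snd q" "fst q"] by (cases q) auto
  qed
qed

lemma abs_rel_eqvt:
  assumes "x \<in> X" "y \<in> X" "abs_rel act (a,x) (b,y)"
  shows "abs_rel act (Perm.apply p a, act p x) (Perm.apply p b, act p y)"
proof -
  obtain c where c: "c \<noteq> a" "c \<noteq> b" "c \<notin> supp act x" "c \<notin> supp act y"
    "act (Perm.swap a c) x = act (Perm.swap b c) y"
    using assms(3) unfolding abs_rel_def fresh_def by auto
  have "act (Perm.swap (Perm.apply p a) (Perm.apply p c)) (act p x) = act p (act (Perm.swap a c) x)"
    using assms by (simp add: act_comp[symmetric] swap_conj)
  moreover have "act (Perm.swap (Perm.apply p b) (Perm.apply p c)) (act p y) = act p (act (Perm.swap b c) y)"
    using assms by (simp add: act_comp[symmetric] swap_conj)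
  ultimately show ?thesis using c fresh_act assms unfolding abs_rel_def fresh_def
    by (auto simp: apply_inj intro!: exI[of _ "Perm.apply p c"])
qed

lemma abs_act_class:
  assumes "x \<in> X"
  shows "abs_act act p (abs_class X act (a,x)) = abs_class X act (Perm.apply p a, act p x)"
proof
  show "abs_act act p (abs_class X act (a,x)) \<subseteq> abs_class X act (Perm.apply p a, act p x)"
    unfolding abs_act_def abs_class_def using abs_rel_eqvt assms by auto
  show "abs_class X act (Perm.apply p a, act p x) \<subseteq> abs_act act p (abs_class X act (a,x))"
  proof
    fix q assume q: "q \<in> abs_class X act (Perm.apply p a, act p x)"
    obtain b y where qq: "q = (b,y)" by fastforce
    have y: "y \<in> X" "abs_rel act (Perm.apply p a, act p x) (b,y)" using q qq unfolding abs_class_def by auto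
    have "abs_rel act (Perm.apply (inverse p) (Perm.apply p a), act (inverse p) (act p x))
        (Perm.apply (inverse p) b, act (inverse p) y)"
      using abs_rel_eqvt[OF _ y(1) y(2)] assms by blast
    hence "(Perm.apply (inverse p) b, act (inverse p) y) \<in> abs_class X act (a,x)"
      using assms y unfolding abs_class_def by auto
    thus "q \<in> abs_act act p (abs_class X act (a,x))"
      unfolding abs_act_def qq using y by (auto intro!: image_eqI)
  qed
qed

lemma supp_eqvt_map:
  assumes "equivariant X act Y actY f" "x \<in> X"
  shows "supp actY (f x) \<subseteq> supp act x"
proof (rule supp_subset)
  show "finite (supp act x)" using supp_props assms by blast
  show "supports actY (supp act x) (f x)"
    unfolding supports_def
  proof (intro allI impI)
    fix p assume "\<forall>a\<in>supp act x. Perm.apply p a = a"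
    hence "act p x = x" using supp_props(2)[OF assms(2)] unfolding supports_def by blast
    moreover have "f (act p x) = actY p (f x)" using assms unfolding equivariant_def by blast
    ultimately show "actY p (f x) = f x" by simp
  qed
qed

end

lemma abs_rel_map:
  assumes "nom X act" "nom Y actY" "equivariant X act Y actY f" "x \<in> X" "x' \<in> X"
    "abs_rel act (a,x) (b,x')"
  shows "abs_rel actY (a, f x) (b, f x')"
proof -
  obtain c where c: "c \<noteq> a" "c \<noteq> b" "c \<notin> supp act x" "c \<notin> supp act x'"
    "act (Perm.swap a c) x = act (Perm.swap b c) x'"
    using assms(6) unfolding abs_rel_def fresh_def by auto
  have "c \<notin> supp actY (f x)" "c \<notin> supp actY (f x')"
    using nom.supp_eqvt_map[OF assms(1,3,4)] nom.supp_eqvt_map[OF assms(1,3,5)] c(3,4) by auto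
  moreover have "actY (Perm.swap a c) (f x) = actY (Perm.swap b c) (f x')"
  proof -
    have "actY (Perm.swap a c) (f x) = f (act (Perm.swap a c) x)"
      using assms(3,4) unfolding equivariant_def by simp
    also have "\<dots> = f (act (Perm.swap b c) x')" using c(5) by simp
    also have "\<dots> = actY (Perm.swap b c) (f x')"
      using assms(3,5) unfolding equivariant_def by simp
    finally show ?thesis .
  qed
  ultimately show ?thesis using c unfolding abs_rel_def fresh_def by (simp, intro exI[of _ c]) simp
qed


fun atoms :: "barstring \<Rightarrow> name set" where
  "atoms [] = {}"
| "atoms (Nm a # w) = insert a (atoms w)"
| "atoms (Bar a # w) = insert a (atoms w)"

fun fn :: "barstring \<Rightarrow> name set" where
  "fn [] = {}"
| "fn (Nm a # w) = insert a (fn w)"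
| "fn (Bar a # w) = fn w - {a}"

lemma bs_act_simps[simp]:
  "bs_act p [] = []"
  "bs_act p (Nm a # w) = Nm (Perm.apply p a) # bs_act p w"
  "bs_act p (Bar a # w) = Bar (Perm.apply p a) # bs_act p w"
  "bs_act p (x @ y) = bs_act p x @ bs_act p y"
  by (simp_all add: bs_act_def)

lemma barname_act_1: "barname_act 1 b = b" by (cases b) auto
lemma barname_act_comp: "barname_act (p * q) b = barname_act p (barname_act q b)"
  by (cases b) (auto simp: apply_times)

lemma bs_act_1[simp]: "bs_act 1 w = w"
  by (simp add: bs_act_def barname_act_1 map_idI)
lemma bs_act_comp: "bs_act (p * q) w = bs_act p (bs_act q w)"
  by (induction w) (auto simp: bs_act_def barname_act_comp)

lemma bs_act_agree: "(\<And>a. a \<in> atoms w \<Longrightarrow> Perm.apply p a = Perm.apply q a) \<Longrightarrow> bs_act p w = bs_act q w"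
proof (induction w)
  case Nil thus ?case by simp
next
  case (Cons b w) thus ?case by (cases b) auto
qed

lemma atoms_eqvt: "atoms (bs_act p w) = Perm.apply p ` atoms w"
proof (induction w)
  case Nil thus ?case by simp
next
  case (Cons b w) thus ?case by (cases b) auto
qed

lemma fn_eqvt: "fn (bs_act p w) = Perm.apply p ` fn w"
proof (induction w)
  case Nil thus ?case by simp
next
  case (Cons b w) thus ?case by (cases b) (auto simp: apply_inj)
qed

lemma finite_atoms[simp]: "finite (atoms w)"
proof (induction w)
  case Nil thus ?case by simp
next
  case (Cons b w) thus ?case by (cases b) auto
qed

lemma fn_atoms: "fn w \<subseteq> atoms w"
proof (induction w)
  case Nil thus ?case by simp
next
  case (Cons b w) thus ?case by (cases b) auto
qed

lemma finite_fn[simp]: "finite (fn w)"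
  using fn_atoms finite_atoms finite_subset by blast

lemma bs_supports: "supports bs_act (atoms w) w"
  unfolding supports_def
proof (intro allI impI)
  fix p assume "\<forall>a\<in>atoms w. Perm.apply p a = a"
  hence "bs_act p w = bs_act 1 w" by (intro bs_act_agree) simp
  thus "bs_act p w = w" by simp
qed

lemma swap_image_mem: "a \<in> A \<Longrightarrow> Perm.apply (Perm.swap a b) ` A = A \<Longrightarrow> b \<in> A"
  by (metis apply_swap_simp(1) imageI)

lemma supp_bs: "supp bs_act w = atoms w"
proof (rule supp_eqI)
  show "finite (atoms w)" by simp
  show "supports bs_act (atoms w) w" by (rule bs_supports)
  fix S assume S: "finite S" "supports bs_act S w"
  show "atoms w \<subseteq> S"
  proof
    fix a assume a: "a \<in> atoms w"
    show "a \<in> S"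
    proof (rule ccontr)
      assume aS: "a \<notin> S"
      have "finite (S \<union> atoms w)" using S by simp
      then obtain b where b: "b \<notin> S \<union> atoms w" by (rule obtain_fresh)
      have "\<forall>c\<in>S. Perm.apply (Perm.swap a b) c = c" using aS b by (metis Un_iff apply_swap_same)
      hence "bs_act (Perm.swap a b) w = w" using S(2) unfolding supports_def by blast
      hence "Perm.apply (Perm.swap a b) ` atoms w = atoms w" by (metis atoms_eqvt)
      hence "b \<in> atoms w" by (rule swap_image_mem[OF a])
      thus False using b by simp
    qed
  qed
qed

lemma nom_bs: "nom UNIV bs_act"
  unfolding nom_def nominal_set_def
  using bs_act_comp bs_supports supp_bs supp_subset
  by (metis UNIV_I bs_act_1 finite_atoms)

interpretation bs: nom UNIV bs_act by (rule nom_bs)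


lemma alpha_prefix: "alpha_eq v w \<Longrightarrow> alpha_eq (x @ v) (x @ w)"
proof (induction rule: alpha_eq.induct)
  case (alpha_refl w) thus ?case by (rule alpha_eq.alpha_refl)
next
  case (alpha_sym v w) thus ?case by (metis alpha_eq.alpha_sym)
next
  case (alpha_trans u v w) thus ?case by (metis alpha_eq.alpha_trans)
next
  case (alpha_bind a v b w y)
  have "alpha_eq ((x @ y) @ Bar a # v) ((x @ y) @ Bar b # w)" by (rule alpha_eq.alpha_bind[OF alpha_bind])
  thus ?case by simp
qed

lemma alpha_Bar: "alpha_eq v w \<Longrightarrow> alpha_eq (Bar a # v) (Bar a # w)"
  using alpha_prefix[of v w "[Bar a]"] by simp
lemma alpha_Nm: "alpha_eq v w \<Longrightarrow> alpha_eq (Nm a # v) (Nm a # w)"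
  using alpha_prefix[of v w "[Nm a]"] by simp

lemma alpha_eqvt: "alpha_eq v w \<Longrightarrow> alpha_eq (bs_act p v) (bs_act p w)"
proof (induction rule: alpha_eq.induct)
  case (alpha_refl w) thus ?case by (rule alpha_eq.alpha_refl)
next
  case (alpha_sym v w) thus ?case by (metis alpha_eq.alpha_sym)
next
  case (alpha_trans u v w) thus ?case by (metis alpha_eq.alpha_trans)
next
  case (alpha_bind a v b w y)
  have "abs_act bs_act p (abs_class UNIV bs_act (a, v)) = abs_act bs_act p (abs_class UNIV bs_act (b, w))"
    using alpha_bind by simp
  hence "abs_class UNIV bs_act (Perm.apply p a, bs_act p v) = abs_class UNIV bs_act (Perm.apply p b, bs_act p w)"
    by (simp add: bs.abs_act_class)
  hence "alpha_eq (bs_act p y @ Bar (Perm.apply p a) # bs_act p v) (bs_act p y @ Bar (Perm.apply p b) # bs_act p w)"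
    by (rule alpha_eq.alpha_bind)
  thus ?case by simp
qed

lemma fn_append_cong: "fn v = fn w \<Longrightarrow> fn (x @ v) = fn (x @ w)"
proof (induction x)
  case Nil thus ?case by simp
next
  case (Cons b x) thus ?case by (cases b) auto
qed

lemma swap_image_minus:
  assumes "c \<notin> A"
  shows "Perm.apply (Perm.swap a c) ` A - {c} = A - {a}"
proof
  show "Perm.apply (Perm.swap a c) ` A - {c} \<subseteq> A - {a}"
  proof
    fix y assume y: "y \<in> Perm.apply (Perm.swap a c) ` A - {c}"
    then obtain x where x: "x \<in> A" "y = Perm.apply (Perm.swap a c) x" by blast
    have "x \<noteq> c" using x assms by blast
    moreover have "x \<noteq> a" using x y by auto
    ultimately have "y = x" using x by simp
    thus "y \<in> A - {a}" using x \<open>x \<noteq> a\<close> by simp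
  qed
  show "A - {a} \<subseteq> Perm.apply (Perm.swap a c) ` A - {c}"
  proof
    fix x assume x: "x \<in> A - {a}"
    have "x \<noteq> c" using x assms by blast
    hence "Perm.apply (Perm.swap a c) x = x" using x by simp
    thus "x \<in> Perm.apply (Perm.swap a c) ` A - {c}" using x \<open>x \<noteq> c\<close> by (metis DiffD1 DiffI image_eqI singletonD)
  qed
qed

lemma fn_alpha: "alpha_eq v w \<Longrightarrow> fn v = fn w"
proof (induction rule: alpha_eq.induct)
  case (alpha_refl w) thus ?case by simp
next
  case (alpha_sym v w) thus ?case by simp
next
  case (alpha_trans u v w) thus ?case by simp
next
  case (alpha_bind a v b w y)
  have "abs_rel bs_act (a,v) (b,w)" using alpha_bind bs.abs_class_eq_iff by blast
  then obtain c where c: "c \<noteq> a" "c \<noteq> b" "c \<notin> supp bs_act v" "c \<notin> supp bs_act w"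
    "bs_act (Perm.swap a c) v = bs_act (Perm.swap b c) w"
    unfolding abs_rel_def fresh_def by auto
  have cv: "c \<notin> fn v" "c \<notin> fn w" using c(3,4) fn_atoms supp_bs by blast+
  have "fn v - {a} = Perm.apply (Perm.swap a c) ` fn v - {c}" using swap_image_minus[OF cv(1)] by simp
  also have "\<dots> = fn (bs_act (Perm.swap a c) v) - {c}" by (simp add: fn_eqvt)
  also have "\<dots> = fn (bs_act (Perm.swap b c) w) - {c}" using c(5) by simp
  also have "\<dots> = Perm.apply (Perm.swap b c) ` fn w - {c}" by (simp add: fn_eqvt)
  also have "\<dots> = fn w - {b}" using swap_image_minus[OF cv(2)] by simp
  finally have "fn (Bar a # v) = fn (Bar b # w)" by simp
  thus ?case by (rule fn_append_cong)
qed

lemma alpha_rename: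
  assumes "c \<notin> atoms w" "c \<noteq> a"
  shows "alpha_eq (Bar a # w) (Bar c # bs_act (Perm.swap a c) w)"
proof -
  have "finite (atoms w \<union> {a, c})" by simp
  then obtain d where d: "d \<notin> atoms w \<union> {a, c}" by (rule obtain_fresh)
  have eq: "bs_act (Perm.swap a d) w = bs_act (Perm.swap c d) (bs_act (Perm.swap a c) w)"
  proof -
    have "bs_act (Perm.swap a d) w = bs_act (Perm.swap c d * Perm.swap a c) w"
    proof (rule bs_act_agree)
      fix x assume "x \<in> atoms w"
      hence "x \<noteq> c" "x \<noteq> d" using assms d by auto
      thus "Perm.apply (Perm.swap a d) x = Perm.apply (Perm.swap c d * Perm.swap a c) x"
        using d assms by (auto simp: apply_times swap_apply)
    qed
    thus ?thesis by (simp add: bs_act_comp)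
  qed
  have "d \<notin> atoms (bs_act (Perm.swap a c) w)" using d by (auto simp: atoms_eqvt swap_apply)
  hence "abs_rel bs_act (a, w) (c, bs_act (Perm.swap a c) w)"
    using d eq unfolding abs_rel_def fresh_def supp_bs by (simp, intro exI[of _ d]) simp
  hence "abs_class UNIV bs_act (a, w) = abs_class UNIV bs_act (c, bs_act (Perm.swap a c) w)"
    using bs.abs_class_eq_iff by blast
  hence "alpha_eq ([] @ Bar a # w) ([] @ Bar c # bs_act (Perm.swap a c) w)" by (rule alpha_eq.alpha_bind)
  thus ?thesis by simp
qed

lemma alpha_supp: "(\<And>x. x \<in> fn w \<Longrightarrow> Perm.apply p x = x) \<Longrightarrow> alpha_eq (bs_act p w) w"
proof (induction w arbitrary: p)
  case Nil thus ?case by (simp add: alpha_refl)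
next
  case (Cons bn w)
  show ?case
  proof (cases bn)
    case (Nm a)
    thus ?thesis using Cons by (simp add: alpha_Nm)
  next
    case (Bar a)
    have fix1: "Perm.apply p x = x" if "x \<in> fn w" "x \<noteq> a" for x using Cons.prems that Bar by simp
    show ?thesis
    proof (cases "Perm.apply p a = a")
      case True
      hence "alpha_eq (bs_act p w) w" using fix1 by (metis Cons.IH)
      thus ?thesis using Bar True by (simp add: alpha_Bar)
    next
      case False
      define b where "b = Perm.apply p a"
      have "finite (atoms w \<union> atoms (bs_act p w) \<union> {a, b})" by simp
      then obtain c where c: "c \<notin> atoms w \<union> atoms (bs_act p w) \<union> {a, b}" by (rule obtain_fresh)
      define s where "s = Perm.swap a c * Perm.swap b c * p"
      have sfix: "Perm.apply s x = x" if x: "x \<in> fn w" for x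
      proof (cases "x = a")
        case True thus ?thesis using c by (simp add: s_def apply_times b_def swap_apply)
      next
        case xa: False
        have px: "Perm.apply p x = x" using fix1 x xa by simp
        have "x \<noteq> b" using px xa unfolding b_def by (metis apply_inj)
        moreover have "x \<noteq> c" using x c fn_atoms by blast
        ultimately show ?thesis using px xa by (simp add: s_def apply_times swap_apply)
      qed
      have "alpha_eq (bs_act s w) w" using sfix by (rule Cons.IH)
      hence "alpha_eq (bs_act (Perm.swap a c) (bs_act s w)) (bs_act (Perm.swap a c) w)" by (rule alpha_eqvt)
      moreover have "bs_act (Perm.swap a c) (bs_act s w) = bs_act (Perm.swap b c) (bs_act p w)"
      proof -
        have "Perm.swap a c * s = Perm.swap b c * p"
          unfolding s_def by (simp add: mult.assoc[symmetric])
        thus ?thesis by (metis bs_act_comp)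
      qed
      ultimately have m: "alpha_eq (bs_act (Perm.swap b c) (bs_act p w)) (bs_act (Perm.swap a c) w)" by simp
      have r1: "alpha_eq (Bar b # bs_act p w) (Bar c # bs_act (Perm.swap b c) (bs_act p w))"
        using c by (intro alpha_rename) auto
      have r2: "alpha_eq (Bar a # w) (Bar c # bs_act (Perm.swap a c) w)"
        using c by (intro alpha_rename) auto
      have "alpha_eq (Bar b # bs_act p w) (Bar a # w)"
        by (meson alpha_Bar alpha_sym alpha_trans m r1 r2)
      thus ?thesis using Bar b_def by simp
    qed
  qed
qed


lemma ac_mem: "v \<in> alpha_class w \<longleftrightarrow> alpha_eq w v"
  by (simp add: alpha_class_def)

lemma ac_eq: "alpha_class v = alpha_class w \<longleftrightarrow> alpha_eq v w"
proof
  assume "alpha_class v = alpha_class w"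
  moreover have "w \<in> alpha_class w" by (simp add: ac_mem alpha_refl)
  ultimately have "w \<in> alpha_class v" by simp
  thus "alpha_eq v w" by (simp add: ac_mem)
next
  assume e: "alpha_eq v w"
  have "alpha_eq v u \<longleftrightarrow> alpha_eq w u" for u
    using e alpha_sym alpha_trans by metis
  hence "alpha_eq v = alpha_eq w" by (intro ext)
  thus "alpha_class v = alpha_class w"
    unfolding alpha_class_def by simp
qed

lemma ac_act: "BS_alpha_act p (alpha_class w) = alpha_class (bs_act p w)"
proof
  show "BS_alpha_act p (alpha_class w) \<subseteq> alpha_class (bs_act p w)"
    unfolding BS_alpha_act_def by (auto simp: ac_mem intro: alpha_eqvt)
  show "alpha_class (bs_act p w) \<subseteq> BS_alpha_act p (alpha_class w)"
  proof
    fix u assume "u \<in> alpha_class (bs_act p w)"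
    hence "alpha_eq (bs_act p w) u" by (simp add: ac_mem)
    hence "alpha_eq (bs_act (inverse p) (bs_act p w)) (bs_act (inverse p) u)" by (rule alpha_eqvt)
    hence "alpha_eq w (bs_act (inverse p) u)" by (simp add: bs_act_comp[symmetric])
    moreover have "u = bs_act p (bs_act (inverse p) u)" by (simp add: bs_act_comp[symmetric])
    ultimately show "u \<in> BS_alpha_act p (alpha_class w)"
      unfolding BS_alpha_act_def by (metis ac_mem image_eqI)
  qed
qed

lemma some_ac: "alpha_eq w (SOME v. v \<in> alpha_class w)"
proof -
  have "w \<in> alpha_class w" by (simp add: ac_mem alpha_refl)
  hence "(SOME v. v \<in> alpha_class w) \<in> alpha_class w" by (rule someI)
  thus ?thesis by (simp add: ac_mem)
qed

lemma BS_alphaE: "C \<in> BS_alpha \<Longrightarrow> (\<And>w. C = alpha_class w \<Longrightarrow> P) \<Longrightarrow> P"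
  unfolding BS_alpha_def by blast

lemma ac_in[simp]: "alpha_class w \<in> BS_alpha"
  unfolding BS_alpha_def by simp

lemma fn_supports: "supports BS_alpha_act (fn w) (alpha_class w)"
  unfolding supports_def
proof (intro allI impI)
  fix p assume h: "\<forall>a\<in>fn w. Perm.apply p a = a"
  have "alpha_eq (bs_act p w) w" by (rule alpha_supp) (use h in blast)
  hence "alpha_class (bs_act p w) = alpha_class w" by (simp only: ac_eq)
  thus "BS_alpha_act p (alpha_class w) = alpha_class w" by (simp only: ac_act)
qed

lemma fn_least:
  assumes S: "finite S" "supports BS_alpha_act S (alpha_class w)"
  shows "fn w \<subseteq> S"
proof
  fix a assume a: "a \<in> fn w"
  show "a \<in> S"
  proof (rule ccontr)
    assume aS: "a \<notin> S"
    have "finite (S \<union> atoms w)" using S(1) by simp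
    then obtain b where b: "b \<notin> S \<union> atoms w" by (rule obtain_fresh)
    have "\<forall>c\<in>S. Perm.apply (Perm.swap a b) c = c" using aS b by (metis Un_iff apply_swap_same)
    hence "BS_alpha_act (Perm.swap a b) (alpha_class w) = alpha_class w" using S(2) unfolding supports_def by blast
    hence "alpha_eq (bs_act (Perm.swap a b) w) w" by (simp only: ac_act ac_eq)
    hence "fn (bs_act (Perm.swap a b) w) = fn w" by (rule fn_alpha)
    hence "Perm.apply (Perm.swap a b) ` fn w = fn w" by (simp only: fn_eqvt)
    hence "b \<in> fn w" by (rule swap_image_mem[OF a])
    thus False using b fn_atoms by blast
  qed
qed

lemma supp_BS: "supp BS_alpha_act (alpha_class w) = fn w"
proof (rule supp_eqI)
  show "finite (fn w)" by simp
  show "supports BS_alpha_act (fn w) (alpha_class w)" by (rule fn_supports)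
  show "fn w \<subseteq> S'" if "finite S'" "supports BS_alpha_act S' (alpha_class w)" for S'
    using that by (rule fn_least)
qed

lemma nom_BS: "nom BS_alpha BS_alpha_act"
  unfolding nom_def nominal_set_def
proof (intro conjI ballI allI)
  fix x p assume "x \<in> BS_alpha"
  then obtain w where w: "x = alpha_class w" by (rule BS_alphaE)
  show "BS_alpha_act p x \<in> BS_alpha" unfolding w ac_act by (rule ac_in)
next
  fix x assume "x \<in> BS_alpha"
  then obtain w where w: "x = alpha_class w" by (rule BS_alphaE)
  show "BS_alpha_act 1 x = x" unfolding w ac_act by (simp only: bs_act_1)
next
  fix x p q assume "x \<in> BS_alpha"
  then obtain w where w: "x = alpha_class w" by (rule BS_alphaE)
  show "BS_alpha_act (p * q) x = BS_alpha_act p (BS_alpha_act q x)"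
    unfolding w ac_act by (simp only: bs_act_comp)
next
  fix x assume "x \<in> BS_alpha"
  then obtain w where w: "x = alpha_class w" by (rule BS_alphaE)
  have "finite (fn w) \<and> supports BS_alpha_act (fn w) x \<and>
          (\<forall>S'. finite S' \<and> supports BS_alpha_act S' x \<longrightarrow> fn w \<subseteq> S')"
    unfolding w using fn_supports fn_least finite_fn by blast
  thus "\<exists>S. finite S \<and> supports BS_alpha_act S x \<and>
          (\<forall>S'. finite S' \<and> supports BS_alpha_act S' x \<longrightarrow> S \<subseteq> S')" by (rule exI)
qed

interpretation BS: nom BS_alpha BS_alpha_act by (rule nom_BS)

lemma alpha_rename2:
  assumes "c \<notin> fn w"
  shows "alpha_eq (Bar c # bs_act (Perm.swap a c) w) (Bar a # w)"
proof -
  have "alpha_eq (bs_act (Perm.swap a c) (Bar a # w)) (Bar a # w)"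
    using assms by (intro alpha_supp) (auto simp: swap_apply)
  thus ?thesis by simp
qed

lemma iota_abs_rep:
  assumes "(a', C') \<in> abs_class BS_alpha BS_alpha_act (a, alpha_class w)" "w' \<in> C'"
  shows "alpha_eq (Bar a # w) (Bar a' # w')"
proof -
  have C': "C' \<in> BS_alpha" "abs_rel BS_alpha_act (a, alpha_class w) (a', C')"
    using assms(1) unfolding abs_class_def by auto
  obtain w'' where "C' = alpha_class w''" using C'(1) by (rule BS_alphaE)
  hence Cw: "C' = alpha_class w'" using assms(2) by (simp add: ac_mem ac_eq)
  obtain c where c: "c \<noteq> a" "c \<noteq> a'" "c \<notin> fn w" "c \<notin> fn w'"
    "BS_alpha_act (Perm.swap a c) (alpha_class w) = BS_alpha_act (Perm.swap a' c) (alpha_class w')"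
    using C'(2) unfolding abs_rel_def fresh_def Cw supp_BS by (auto simp only: supp_BS)
  have m: "alpha_eq (bs_act (Perm.swap a c) w) (bs_act (Perm.swap a' c) w')"
    using c(5) by (simp only: ac_act ac_eq)
  have "alpha_eq (Bar a # w) (Bar c # bs_act (Perm.swap a c) w)"
    using alpha_rename2[OF c(3)] by (rule alpha_sym)
  moreover have "alpha_eq (Bar c # bs_act (Perm.swap a c) w) (Bar c # bs_act (Perm.swap a' c) w')"
    using m by (rule alpha_Bar)
  moreover have "alpha_eq (Bar c # bs_act (Perm.swap a' c) w') (Bar a' # w')"
    by (rule alpha_rename2[OF c(4)])
  ultimately show ?thesis by (meson alpha_trans)
qed

lemma abs_class_self: "x \<in> X \<Longrightarrow> nom X act \<Longrightarrow> (a, x) \<in> abs_class X act (a, x)"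
  unfolding abs_class_def by (simp add: nom.abs_rel_refl)

lemma iota_abs:
  "iota (Inr (Inr (abs_class BS_alpha BS_alpha_act (a, alpha_class w)))) = alpha_class (Bar a # w)"
proof -
  define D where "D = abs_class BS_alpha BS_alpha_act (a, alpha_class w)"
  have "(a, alpha_class w) \<in> D" unfolding D_def by (rule abs_class_self[OF ac_in nom_BS])
  hence sD: "(SOME p. p \<in> D) \<in> D" by (rule someI)
  obtain a' C' where aC: "(SOME p. p \<in> D) = (a', C')" by fastforce
  have inD: "(a', C') \<in> D" using sD aC by simp
  hence "C' \<in> BS_alpha" unfolding D_def abs_class_def by simp
  then obtain w'' where "C' = alpha_class w''" by (rule BS_alphaE)
  hence "w'' \<in> C'" by (simp add: ac_mem alpha_refl)
  hence "(SOME v. v \<in> C') \<in> C'" by (rule someI)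
  hence "alpha_eq (Bar a # w) (Bar a' # (SOME v. v \<in> C'))"
    using inD unfolding D_def by (intro iota_abs_rep) 
  hence "alpha_class (Bar a' # (SOME v. v \<in> C')) = alpha_class (Bar a # w)"
    by (simp add: ac_eq alpha_sym)
  thus ?thesis using aC unfolding D_def[symmetric] by simp
qed

lemma iota_Nm: "iota (Inr (Inl (a, alpha_class w))) = alpha_class (Nm a # w)"
  using some_ac[of w] by (simp add: ac_eq alpha_Nm alpha_sym)


lemma F_carrier_Inl: "Inl () \<in> F_carrier X act"
  by (simp add: F_carrier_def)
lemma F_carrier_Nm: "x \<in> X \<Longrightarrow> Inr (Inl (a, x)) \<in> F_carrier X act"
  by (simp add: F_carrier_def)
lemma F_carrier_Bar: "x \<in> X \<Longrightarrow> Inr (Inr (abs_class X act (a, x))) \<in> F_carrier X act"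
  unfolding F_carrier_def abs_set_def by blast

lemma F_carrierE:
  assumes "z \<in> F_carrier X act"
  obtains "z = Inl ()"
  | a x where "x \<in> X" "z = Inr (Inl (a, x))"
  | a x where "x \<in> X" "z = Inr (Inr (abs_class X act (a, x)))"
  using assms unfolding F_carrier_def abs_set_def by blast

lemma BS_F_algebra: "F_algebra BS_alpha BS_alpha_act iota"
  unfolding F_algebra_def equivariant_def
proof (intro conjI ballI allI)
  show "nominal_set BS_alpha BS_alpha_act" using nom_BS by (simp add: nom_def)
next
  fix z assume "z \<in> F_carrier BS_alpha BS_alpha_act"
  thus "iota z \<in> BS_alpha"
  proof (cases rule: F_carrierE)
    case 1 thus ?thesis by simp
  next
    case (2 a x) thus ?thesis by simp
  next
    case (3 a x) thus ?thesis by (simp split: prod.split)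
  qed
next
  fix p z assume "z \<in> F_carrier BS_alpha BS_alpha_act"
  thus "iota (F_act BS_alpha_act p z) = BS_alpha_act p (iota z)"
  proof (cases rule: F_carrierE)
    case 1 thus ?thesis by (simp add: ac_act)
  next
    case (2 a x)
    then obtain w where w: "x = alpha_class w" by (auto elim: BS_alphaE)
    show ?thesis using 2 w by (simp del: iota.simps add: ac_act iota_Nm)
  next
    case (3 a x)
    then obtain w where w: "x = alpha_class w" by (auto elim: BS_alphaE)
    have "F_act BS_alpha_act p z = Inr (Inr (abs_class BS_alpha BS_alpha_act (Perm.apply p a, alpha_class (bs_act p w))))"
      using 3 w by (simp add: BS.abs_act_class ac_act)
    thus ?thesis using 3 w by (simp del: iota.simps add: iota_abs ac_act)
  qed
qed

fun h0 :: "'y set \<Rightarrow> (nperm \<Rightarrow> 'y \<Rightarrow> 'y) \<Rightarrow> ('y F \<Rightarrow> 'y) \<Rightarrow> barstring \<Rightarrow> 'y" where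
  "h0 Y actY g [] = g (Inl ())"
| "h0 Y actY g (Nm a # w) = g (Inr (Inl (a, h0 Y actY g w)))"
| "h0 Y actY g (Bar a # w) = g (Inr (Inr (abs_class Y actY (a, h0 Y actY g w))))"

locale alg = nom Y actY for Y :: "'y set" and actY +
  fixes g :: "'y F \<Rightarrow> 'y"
  assumes geq: "equivariant (F_carrier Y actY) (F_act actY) Y actY g"
begin

lemma g_in: "z \<in> F_carrier Y actY \<Longrightarrow> g z \<in> Y"
  using geq unfolding equivariant_def by blast
lemma g_eqvt: "z \<in> F_carrier Y actY \<Longrightarrow> g (F_act actY p z) = actY p (g z)"
  using geq unfolding equivariant_def by blast

lemma h0_in: "h0 Y actY g w \<in> Y"
proof (induction w)
  case Nil thus ?case by (simp add: g_in F_carrier_Inl)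
next
  case (Cons b w) thus ?case by (cases b) (simp_all add: g_in F_carrier_Nm F_carrier_Bar)
qed

lemma h0_eqvt: "h0 Y actY g (bs_act p w) = actY p (h0 Y actY g w)"
proof (induction w)
  case Nil
  have "g (F_act actY p (Inl ())) = actY p (g (Inl ()))" by (rule g_eqvt[OF F_carrier_Inl])
  thus ?case by simp
next
  case (Cons b w)
  show ?case
  proof (cases b)
    case (Nm a)
    have "g (F_act actY p (Inr (Inl (a, h0 Y actY g w)))) = actY p (g (Inr (Inl (a, h0 Y actY g w))))"
      by (rule g_eqvt[OF F_carrier_Nm[OF h0_in]])
    thus ?thesis using Nm Cons by simp
  next
    case (Bar a)
    have "g (F_act actY p (Inr (Inr (abs_class Y actY (a, h0 Y actY g w))))) =
          actY p (g (Inr (Inr (abs_class Y actY (a, h0 Y actY g w)))))"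
      by (rule g_eqvt[OF F_carrier_Bar[OF h0_in]])
    thus ?thesis using Bar Cons by (simp add: abs_act_class[OF h0_in])
  qed
qed

lemma h0_equivariant: "equivariant UNIV bs_act Y actY (h0 Y actY g)"
  unfolding equivariant_def using h0_in h0_eqvt by blast

lemma h0_append_cong: "h0 Y actY g v = h0 Y actY g w \<Longrightarrow> h0 Y actY g (x @ v) = h0 Y actY g (x @ w)"
proof (induction x)
  case Nil thus ?case by simp
next
  case (Cons b x) thus ?case by (cases b) simp_all
qed

lemma h0_alpha: "alpha_eq v w \<Longrightarrow> h0 Y actY g v = h0 Y actY g w"
proof (induction rule: alpha_eq.induct)
  case (alpha_refl w) thus ?case by simp
next
  case (alpha_sym v w) thus ?case by simp
next
  case (alpha_trans u v w) thus ?case by simp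
next
  case (alpha_bind a v b w y)
  have "abs_rel bs_act (a,v) (b,w)" using alpha_bind bs.abs_class_eq_iff by blast
  hence "abs_rel actY (a, h0 Y actY g v) (b, h0 Y actY g w)"
    by (rule abs_rel_map[OF nom_bs nom_axioms h0_equivariant UNIV_I UNIV_I])
  hence "abs_class Y actY (a, h0 Y actY g v) = abs_class Y actY (b, h0 Y actY g w)"
    using abs_class_eq_iff[OF h0_in h0_in] by blast
  hence "h0 Y actY g (Bar a # v) = h0 Y actY g (Bar b # w)" by simp
  thus ?case by (rule h0_append_cong)
qed

definition hh :: "barstring set \<Rightarrow> 'y" where
  "hh C = h0 Y actY g (SOME w. w \<in> C)"

lemma hh_ac: "hh (alpha_class w) = h0 Y actY g w"
  unfolding hh_def using some_ac[of w] h0_alpha by metis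

lemma hh_hom: "F_alg_hom BS_alpha BS_alpha_act iota Y actY g hh"
  unfolding F_alg_hom_def equivariant_def
proof (intro conjI ballI allI)
  fix x assume "x \<in> BS_alpha"
  then obtain w where w: "x = alpha_class w" by (rule BS_alphaE)
  show "hh x \<in> Y" using w hh_ac h0_in by simp
next
  fix p x assume "x \<in> BS_alpha"
  then obtain w where w: "x = alpha_class w" by (rule BS_alphaE)
  show "hh (BS_alpha_act p x) = actY p (hh x)" using w by (simp add: ac_act hh_ac h0_eqvt)
next
  fix z assume "z \<in> F_carrier BS_alpha BS_alpha_act"
  thus "hh (iota z) = g (F_map Y actY hh z)"
  proof (cases rule: F_carrierE)
    case 1 thus ?thesis by (simp add: hh_ac)
  next
    case (2 a x) thus ?thesis by (simp add: hh_ac) (simp add: hh_def)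
  next
    case (3 a x)
    define D where "D = abs_class BS_alpha BS_alpha_act (a, x)"
    obtain a' C' where aC: "(SOME p. p \<in> D) = (a', C')" by fastforce
    show ?thesis using 3 aC unfolding D_def[symmetric] by (simp add: hh_ac) (simp add: hh_def)
  qed
qed

lemma hh_unique:
  assumes h': "F_alg_hom BS_alpha BS_alpha_act iota Y actY g h'"
  shows "h' (alpha_class w) = h0 Y actY g w"
proof -
  have eqv: "equivariant BS_alpha BS_alpha_act Y actY h'" using h' unfolding F_alg_hom_def by blast
  have hom: "\<And>z. z \<in> F_carrier BS_alpha BS_alpha_act \<Longrightarrow> h' (iota z) = g (F_map Y actY h' z)"
    using h' unfolding F_alg_hom_def by blast
  have h'in: "\<And>x. x \<in> BS_alpha \<Longrightarrow> h' x \<in> Y" using eqv unfolding equivariant_def by blast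
  show ?thesis
  proof (induction w)
    case Nil
    have "h' (iota (Inl ())) = g (F_map Y actY h' (Inl ()))" by (rule hom[OF F_carrier_Inl])
    thus ?case by simp
  next
    case (Cons b w)
    show ?case
    proof (cases b)
      case (Nm a)
      have "h' (iota (Inr (Inl (a, alpha_class w)))) = g (F_map Y actY h' (Inr (Inl (a, alpha_class w))))"
        by (rule hom[OF F_carrier_Nm[OF ac_in]])
      thus ?thesis using Nm Cons.IH by (simp del: iota.simps add: iota_Nm)
    next
      case (Bar a)
      define D where "D = abs_class BS_alpha BS_alpha_act (a, alpha_class w)"
      have "h' (iota (Inr (Inr D))) = g (F_map Y actY h' (Inr (Inr D)))"
        unfolding D_def by (rule hom[OF F_carrier_Bar[OF ac_in]])
      hence e1: "h' (alpha_class (Bar a # w)) = g (F_map Y actY h' (Inr (Inr D)))"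
        unfolding D_def by (simp only: iota_abs)
      have "(a, alpha_class w) \<in> D" unfolding D_def by (rule abs_class_self[OF ac_in nom_BS])
      hence sD: "(SOME p. p \<in> D) \<in> D" by (rule someI)
      obtain a' C' where aC: "(SOME p. p \<in> D) = (a', C')" by fastforce
      have inD: "(a', C') \<in> D" using sD aC by simp
      hence C': "C' \<in> BS_alpha" "abs_rel BS_alpha_act (a, alpha_class w) (a', C')"
        unfolding D_def abs_class_def by simp_all
      have "abs_rel actY (a, h' (alpha_class w)) (a', h' C')"
        by (rule abs_rel_map[OF nom_BS nom_axioms eqv ac_in C'(1) C'(2)])
      hence "abs_rel actY (a', h' C') (a, h' (alpha_class w))" by (rule abs_rel_sym)
      hence "abs_class Y actY (a', h' C') = abs_class Y actY (a, h' (alpha_class w))"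
        using abs_class_eq_iff[OF h'in[OF C'(1)] h'in[OF ac_in]] by simp
      hence "F_map Y actY h' (Inr (Inr D)) = Inr (Inr (abs_class Y actY (a, h0 Y actY g w)))"
        using aC Cons.IH by simp
      thus ?thesis using e1 Bar by simp
    qed
  qed
qed

lemma initial_part:
  "\<exists>h. F_alg_hom BS_alpha BS_alpha_act iota Y actY g h \<and>
       (\<forall>h'. F_alg_hom BS_alpha BS_alpha_act iota Y actY g h' \<longrightarrow> (\<forall>x\<in>BS_alpha. h' x = h x))"
proof (intro exI conjI allI impI ballI)
  show "F_alg_hom BS_alpha BS_alpha_act iota Y actY g hh" by (rule hh_hom)
  fix h' x assume h': "F_alg_hom BS_alpha BS_alpha_act iota Y actY g h'" and x: "x \<in> BS_alpha"
  then obtain w where w: "x = alpha_class w" by (auto elim: BS_alphaE)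
  show "h' x = hh x" using hh_unique[OF h'] w by (simp add: hh_ac)
qed

end

lemma F_algebra_alg: "F_algebra Y actY g \<Longrightarrow> alg Y actY g"
  unfolding F_algebra_def alg_def alg_axioms_def nom_def by blast

theorem proposition3p19:
  "initial_F_algebra BS_alpha BS_alpha_act iota TYPE('y)"
  unfolding initial_F_algebra_def
proof (intro conjI allI impI)
  show "F_algebra BS_alpha BS_alpha_act iota" by (rule BS_F_algebra)
  fix Y :: "'y set" and actY g
  assume "F_algebra Y actY g"
  thus "\<exists>h. F_alg_hom BS_alpha BS_alpha_act iota Y actY g h \<and>
             (\<forall>h'. F_alg_hom BS_alpha BS_alpha_act iota Y actY g h' \<longrightarrow> (\<forall>x\<in>BS_alpha. h' x = h x))"
    using alg.initial_part F_algebra_alg by blast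
qed

end
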